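(* For all $n\ge0$, $0\le k\le n$ and complex $a,b,c_0,c_\infty$, $$b^kk!\,E_{n,k}(a,b;c_0,c_\infty)=\sum_{j=0}^k(-1)^{k-j}\binom kj(bn+c_0+c_\infty)^{\underline{k-j},b}(c_0+c_\infty)^{\overline j,b}(bj+c_0)^{\underline n,a},$$ $$(c_0+c_\infty)^{\overline k,b}\,(bk+c_0)^{\underline n,a}=\sum_{j=0}^k\binom kj(bn+c_0+c_\infty)^{\overline{k-j},b}\,b^jj!\,E_{n,j}(a,b;c_0,c_\infty).$$
   Context: GKP triangle $\left[\begin{array}{cc|c}\alpha,&\beta&\gamma\\ \alpha',&\beta'&\gamma'\end{array}\right]_{n,k}$: defined by $T_{0,0}=1$, $T_{n,k}=0$ if $n<0$, $k<0$ or $k>n$, and $T_{n+1,k+1}=[\alpha n+\beta(k+1)+\gamma]T_{n,k+1}+[\alpha' n+\beta' k+\gamma']T_{n,k}$ for $n\ge0$, $k\in\mathbb Z$. Generalized Eulerian numbers: $E_{n,k}(a,b;c_0,c_\infty):=\left[\begin{array}{cc|c}-a,&b&c_0\\ a+b,&-b&c_\infty\end{array}\right]_{n,k}$. $(x)^{\overline n,b}=\prod_{i=0}^{n-1}(x+ib)$, $(x)^{\underline n,b}=\prod_{i=0}^{n-1}(x-ib)$. *)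

theory Defs
  imports Complex_Main
begin

text \<open>GKP triangle T(n,k) with parameters alpha, beta, gamma, alpha', beta', gamma'.
  T(0,0)=1, T(n,k)=0 if k<0 or k>n, and
  T(n+1,k+1) = (alpha n + beta (k+1) + gamma) T(n,k+1) + (alpha' n + beta' k + gamma') T(n,k)
  for all integers k. Equivalently T(n+1,k) uses the recurrence with k-1 in place of k.\<close>

fun gkp :: "complex \<Rightarrow> complex \<Rightarrow> complex \<Rightarrow> complex \<Rightarrow> complex \<Rightarrow> complex \<Rightarrow> nat \<Rightarrow> int \<Rightarrow> complex" where
  "gkp al be ga al' be' ga' 0 k = (if k = 0 then 1 else 0)"
| "gkp al be ga al' be' ga' (Suc n) k =
     (if k < 0 \<or> k > int (Suc n) then 0 else
        (al * of_nat n + be * of_int k + ga) * gkp al be ga al' be' ga' n k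
      + (al' * of_nat n + be' * of_int (k - 1) + ga') * gkp al be ga al' be' ga' n (k - 1))"

definition genEuler :: "complex \<Rightarrow> complex \<Rightarrow> complex \<Rightarrow> complex \<Rightarrow> nat \<Rightarrow> nat \<Rightarrow> complex" where
  "genEuler a b c0 cinf n k = gkp (-a) b c0 (a + b) (-b) cinf n (int k)"

definition rising_b :: "complex \<Rightarrow> nat \<Rightarrow> complex \<Rightarrow> complex" where
  "rising_b x n b = (\<Prod>i<n. x + of_nat i * b)"

definition falling_b :: "complex \<Rightarrow> nat \<Rightarrow> complex \<Rightarrow> complex" where
  "falling_b x n b = (\<Prod>i<n. x - of_nat i * b)"

end

theory Submission
  imports Defs
begin

lemma rb_Suc: "rising_b x (Suc m) b = x * rising_b (x + b) m b"
  unfolding rising_b_def prod.lessThan_Suc_shift by (simp add: algebra_simps)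
lemma rb_Suc2: "rising_b x (Suc m) b = rising_b x m b * (x + of_nat m * b)"
  unfolding rising_b_def by simp
lemma fb_Suc: "falling_b x (Suc m) b = x * falling_b (x - b) m b"
  unfolding falling_b_def prod.lessThan_Suc_shift by (simp add: algebra_simps)
lemma fb_Suc2: "falling_b x (Suc m) b = falling_b x m b * (x - of_nat m * b)"
  unfolding falling_b_def by simp
lemma rb_0 [simp]: "rising_b x 0 b = 1" by (simp add: rising_b_def)
lemma fb_0 [simp]: "falling_b x 0 b = 1" by (simp add: falling_b_def)
lemma fb_neg: "(-1) ^ m * falling_b x m b = rising_b (-x) m b"
  by (induction m) (simp_all add: fb_Suc2 rb_Suc2 algebra_simps)
lemma rb_zero: "rising_b 0 k b = (if k = 0 then 1 else 0)"
  by (cases k) (simp_all add: rb_Suc)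

lemma rb_vandermonde:
  "rising_b (y + z) k b = (\<Sum>j\<le>k. of_nat (k choose j) * rising_b y j b * rising_b z (k - j) b)"
proof (induction k arbitrary: y z)
  case 0
  then show ?case by simp
next
  case (Suc n y z)
  have "(\<Sum>k\<le>Suc n. of_nat (Suc n choose k) * rising_b y k b * rising_b z (Suc n - k) b) =
      (\<Sum>i\<le>n. of_nat (n choose i) * rising_b y (Suc i) b * rising_b z (n - i) b) +
      ((\<Sum>i\<le>n. of_nat (n choose Suc i) * rising_b y (Suc i) b * rising_b z (n - i) b) +
      rising_b z (Suc n) b)"
    by (subst sum.atMost_Suc_shift) (simp add: ring_distribs sum.distrib)
  also have "(\<Sum>i\<le>n. of_nat (n choose i) * rising_b y (Suc i) b * rising_b z (n - i) b) =
      y * rising_b ((y + b) + z) n b"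
    by (subst Suc) (simp add: sum_distrib_left rb_Suc mult_ac)
  also have "(\<Sum>i\<le>n. of_nat(n choose Suc i) * rising_b y (Suc i) b * rising_b z (n-i) b) + rising_b z (Suc n) b
           = of_nat (n choose 0) * rising_b y 0 b * rising_b z (Suc n - 0) b
           + (\<Sum>i = Suc 0..Suc n. of_nat (n choose i) * rising_b y i b * rising_b z (Suc n - i) b)"
    unfolding sum.shift_bounds_cl_Suc_ivl by (simp add: atLeast0AtMost)
  also have "\<dots> = (\<Sum>i=0..Suc n. of_nat (n choose i) * rising_b y i b * rising_b z (Suc n - i) b)"
    by (simp add: sum.atLeast_Suc_atMost)
  also have "\<dots> = (\<Sum>i\<le>n. of_nat (n choose i) * rising_b y i b * rising_b z (Suc n - i) b)"
    by (intro sum.mono_neutral_right) (auto simp: not_le binomial_eq_0)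
  also have "\<dots> = (\<Sum>i\<le>n. of_nat (n choose i) * rising_b y i b * rising_b z (Suc (n - i)) b)"
    by (intro sum.cong refl) (simp add: Suc_diff_le)
  also have "\<dots> = z * rising_b (y + (z + b)) n b"
    by (subst Suc) (simp add: sum_distrib_left mult_ac rb_Suc)
  also have "y * rising_b ((y + b) + z) n b + z * rising_b (y + (z + b)) n b =
      rising_b (y + z) (Suc n) b"
    by (simp add: rb_Suc algebra_simps)
  finally show ?case ..
qed

lemma gkp_zero: "k < 0 \<or> k > int n \<Longrightarrow> gkp al be ga al' be' ga' n k = 0"
  by (cases n) auto

lemma gkp_Suc_all: "gkp al be ga al' be' ga' (Suc n) k =
   (al * of_nat n + be * of_int k + ga) * gkp al be ga al' be' ga' n k
 + (al' * of_nat n + be' * of_int (k - 1) + ga') * gkp al be ga al' be' ga' n (k - 1)"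
proof (cases "k < 0 \<or> k > int (Suc n)")
  case True
  then show ?thesis by (auto simp: gkp_zero simp del: gkp.simps)
next
  case False
  then show ?thesis by simp
qed

definition UU where "UU a b c0 cinf n j = b ^ j * of_nat (fact j) * genEuler a b c0 cinf n j"

lemma UU_0: "UU a b c0 cinf 0 j = (if j = 0 then 1 else 0)"
  by (simp add: UU_def genEuler_def)

lemma UU_Suc: "UU a b c0 cinf (Suc n) j = (b * of_nat j + c0 - a * of_nat n) * UU a b c0 cinf n j
  + (if j = 0 then 0 else ((a + b) * of_nat n - b * of_nat (j - 1) + cinf) * b * of_nat j * UU a b c0 cinf n (j - 1))"
proof (cases j)
  case 0
  then show ?thesis
    by (simp add: UU_def genEuler_def gkp_Suc_all gkp_zero del: gkp.simps(2))
next
  case (Suc i)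
  have "int (Suc i) - 1 = int i" by simp
  then show ?thesis using Suc
    by (simp add: UU_def genEuler_def gkp_Suc_all del: gkp.simps(2) of_nat_Suc) (simp add: algebra_simps)
qed

lemma key1: "rising_b (x + b) m b * d + of_nat m * b * (if m = 0 then 0 else rising_b (x + b) (m - 1) b) * (x - d)
   = (d + b * of_nat m) * rising_b x m b"
proof (cases m)
  case 0 then show ?thesis by simp
next
  case (Suc p)
  have h1: "rising_b (x + b) (Suc p) b = rising_b (x + b) p b * (x + b + of_nat p * b)" by (rule rb_Suc2)
  have h2: "rising_b x (Suc p) b = x * rising_b (x + b) p b" by (rule rb_Suc)
  show ?thesis unfolding Suc h1 h2 by (simp add: algebra_simps)
qed

lemma key2: "falling_b (x + b) (Suc p) b * d = (d + b * of_nat (Suc p)) * falling_b x (Suc p) b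
   - (x - d - b * of_nat p) * b * of_nat (Suc p) * falling_b x p b"
proof -
  have h1: "falling_b (x + b) (Suc p) b = (x + b) * falling_b x p b" using fb_Suc[of "x + b" p b] by simp
  have h2: "falling_b x (Suc p) b = falling_b x p b * (x - of_nat p * b)" by (rule fb_Suc2)
  show ?thesis unfolding h1 h2 by (simp add: algebra_simps)
qed

lemma shift_sum:
  fixes f g :: "nat \<Rightarrow> complex"
  shows "(\<Sum>j\<le>k. of_nat (k choose j) * f (k - j) * (if j = 0 then 0 else g (j - 1) * of_nat j))
    = (\<Sum>j\<le>k. of_nat (k choose j) * of_nat (k - j) * (if k - j = 0 then 0 else f (k - j - 1)) * g j)"
proof (cases k)
  case 0 then show ?thesis by simp
next
  case (Suc k')
  have "(\<Sum>j\<le>k. of_nat (k choose j) * f (k - j) * (if j = 0 then 0 else g (j - 1) * of_nat j))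
     = (\<Sum>i\<le>k'. of_nat (Suc k' choose Suc i) * f (k' - i) * (g i * of_nat (Suc i)))"
    unfolding Suc sum.atMost_Suc_shift by simp
  also have "\<dots> = (\<Sum>i\<le>k'. of_nat (Suc k' choose i) * of_nat (Suc k' - i) * f (k' - i) * g i)"
  proof (intro sum.cong refl)
    fix i assume "i \<in> {..k'}"
    have "Suc i * (Suc k' choose Suc i) = (Suc k' - i) * (Suc k' choose i)"
      using Suc_times_binomial[of i k'] binomial_absorb_comp[of "Suc k'" i] by simp
    then have "of_nat (Suc i * (Suc k' choose Suc i)) = (of_nat ((Suc k' - i) * (Suc k' choose i)) :: complex)"
      by (simp only:)
    then have E: "(of_nat (Suc i) :: complex) * of_nat (Suc k' choose Suc i) = of_nat (Suc k' - i) * of_nat (Suc k' choose i)"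
      by (simp only: of_nat_mult)
    have "of_nat (Suc k' choose Suc i) * f (k' - i) * (g i * of_nat (Suc i))
       = f (k' - i) * g i * ((of_nat (Suc i) :: complex) * of_nat (Suc k' choose Suc i))"
      by (simp only: mult_ac)
    also have "\<dots> = f (k' - i) * g i * (of_nat (Suc k' - i) * of_nat (Suc k' choose i))"
      by (simp only: E)
    also have "\<dots> = of_nat (Suc k' choose i) * of_nat (Suc k' - i) * f (k' - i) * g i"
      by (simp only: mult_ac)
    finally show "of_nat (Suc k' choose Suc i) * f (k' - i) * (g i * of_nat (Suc i))
       = of_nat (Suc k' choose i) * of_nat (Suc k' - i) * f (k' - i) * g i" .
  qed
  also have "\<dots> = (\<Sum>j\<le>k. of_nat (k choose j) * of_nat (k - j) * (if k - j = 0 then 0 else f (k - j - 1)) * g j)"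
  proof -
    have "(\<Sum>i\<le>k'. of_nat (Suc k' choose i) * of_nat (Suc k' - i) * f (k' - i) * g i)
      = (\<Sum>j\<le>k'. of_nat (Suc k' choose j) * of_nat (Suc k' - j) * (if Suc k' - j = 0 then 0 else f (Suc k' - j - 1)) * g j)"
      by (intro sum.cong refl) (auto simp: Suc_diff_le)
    then show ?thesis unfolding Suc sum.atMost_Suc by simp
  qed
  finally show ?thesis .
qed

definition GG where "GG a b c0 cinf n i = ((a + b) * of_nat n - b * of_nat i + cinf) * b * UU a b c0 cinf n i"

lemma UU_Suc': "UU a b c0 cinf (Suc n) j = (b * of_nat j + c0 - a * of_nat n) * UU a b c0 cinf n j
  + (if j = 0 then 0 else GG a b c0 cinf n (j - 1) * of_nat j)"
  by (simp add: UU_Suc GG_def mult_ac)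

lemma ident2: "rising_b (c0 + cinf) k b * falling_b (b * of_nat k + c0) n a =
  (\<Sum>j\<le>k. of_nat (k choose j) * rising_b (b * of_nat n + c0 + cinf) (k - j) b * UU a b c0 cinf n j)"
proof (induction n arbitrary: k)
  case 0
  have "(\<Sum>j\<le>k. of_nat (k choose j) * rising_b (b * of_nat 0 + c0 + cinf) (k - j) b * UU a b c0 cinf 0 j)
     = (\<Sum>j\<le>k. if j = 0 then rising_b (c0 + cinf) k b else 0)"
    by (intro sum.cong refl) (auto simp: UU_0)
  then show ?case by simp
next
  case (Suc n k)
  define x where "x = b * of_nat n + c0 + cinf"
  define D where "D = b * of_nat k + c0 - a * of_nat n"
  define d where "d = (\<lambda>j::nat. b * of_nat j + c0 - a * of_nat n)"
  let ?U = "UU a b c0 cinf n"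
  let ?G = "GG a b c0 cinf n"
  have "rising_b (c0 + cinf) k b * falling_b (b * of_nat k + c0) (Suc n) a
     = D * (rising_b (c0 + cinf) k b * falling_b (b * of_nat k + c0) n a)"
  proof -
    have hf: "falling_b (b * of_nat k + c0) (Suc n) a = falling_b (b * of_nat k + c0) n a * D"
      by (simp add: fb_Suc2 D_def algebra_simps)
    show ?thesis unfolding hf by (simp only: mult_ac)
  qed
  also have "\<dots> = D * (\<Sum>j\<le>k. of_nat (k choose j) * rising_b x (k - j) b * ?U j)"
    unfolding Suc.IH x_def ..
  also have "\<dots> = (\<Sum>j\<le>k. of_nat (k choose j) * ?U j * (D * rising_b x (k - j) b))"
    by (simp add: sum_distrib_left mult_ac)
  also have "\<dots> = (\<Sum>j\<le>k. of_nat (k choose j) * rising_b (x + b) (k - j) b * (d j * ?U j))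
     + (\<Sum>j\<le>k. of_nat (k choose j) * of_nat (k - j) * (if k - j = 0 then 0 else rising_b (x + b) (k - j - 1) b) * ?G j)"
    unfolding sum.distrib[symmetric]
  proof (intro sum.cong refl)
    fix j assume "j \<in> {..k}"
    then have jk: "j \<le> k" by simp
    have e: "D = d j + b * of_nat (k - j)" using jk by (simp add: D_def d_def of_nat_diff algebra_simps)
    have g: "?G j = (x - d j) * b * ?U j" by (simp add: GG_def x_def d_def algebra_simps)
    show "of_nat (k choose j) * ?U j * (D * rising_b x (k - j) b) =
      of_nat (k choose j) * rising_b (x + b) (k - j) b * (d j * ?U j) +
      of_nat (k choose j) * of_nat (k - j) * (if k - j = 0 then 0 else rising_b (x + b) (k - j - 1) b) * ?G j"
      unfolding e g key1[of x b "k - j" "d j", symmetric] by (simp add: algebra_simps)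
  qed
  also have "\<dots> = (\<Sum>j\<le>k. of_nat (k choose j) * rising_b (x + b) (k - j) b * (d j * ?U j))
     + (\<Sum>j\<le>k. of_nat (k choose j) * rising_b (x + b) (k - j) b * (if j = 0 then 0 else ?G (j - 1) * of_nat j))"
    by (subst shift_sum) simp
  also have "\<dots> = (\<Sum>j\<le>k. of_nat (k choose j) * rising_b (b * of_nat (Suc n) + c0 + cinf) (k - j) b * UU a b c0 cinf (Suc n) j)"
    unfolding sum.distrib[symmetric] UU_Suc'
    by (intro sum.cong refl) (simp add: x_def d_def algebra_simps)
  finally show ?case .
qed

lemma alg:
  fixes A D dK A1 e b s A0 K Cp Cc F :: complex
  assumes "A * D = dK * A1 - e * b * s * A0" "K * Cp = Cc * s"
  shows "(-1) ^ Suc p * Cc * A * F * D = dK * ((-1) ^ Suc p * Cc * A1 * F) + e * b * K * ((-1) ^ p * Cp * A0 * F)"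
proof -
  have "(-1) ^ Suc p * Cc * A * F * D = - ((-1) ^ p * Cc * F) * (A * D)" by (simp add: algebra_simps)
  also have "\<dots> = - ((-1) ^ p * Cc * F) * (dK * A1 - e * b * s * A0)" by (simp only: assms(1))
  also have "\<dots> = dK * ((-1) ^ Suc p * Cc * A1 * F) + e * b * ((-1) ^ p * F * A0) * (Cc * s)"
    by (simp add: algebra_simps)
  also have "\<dots> = dK * ((-1) ^ Suc p * Cc * A1 * F) + e * b * ((-1) ^ p * F * A0) * (K * Cp)"
    by (simp only: assms(2))
  also have "\<dots> = dK * ((-1) ^ Suc p * Cc * A1 * F) + e * b * K * ((-1) ^ p * Cp * A0 * F)"
    by (simp add: algebra_simps)
  finally show ?thesis .
qed

definition GT where "GT a b c0 cinf n k j = (-1) ^ (k - j) * of_nat (k choose j)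
              * falling_b (b * of_nat n + c0 + cinf) (k - j) b
              * rising_b (c0 + cinf) j b
              * falling_b (b * of_nat j + c0) n a"

lemma ident1: "UU a b c0 cinf n k = (\<Sum>j\<le>k. GT a b c0 cinf n k j)"
proof (induction n arbitrary: k)
  case 0
  have "(\<Sum>j\<le>k. GT a b c0 cinf 0 k j) = (\<Sum>j\<le>k. of_nat (k choose j) * rising_b (c0 + cinf) j b * rising_b (- (c0 + cinf)) (k - j) b)"
  proof (intro sum.cong refl)
    fix j
    show "GT a b c0 cinf 0 k j = of_nat (k choose j) * rising_b (c0 + cinf) j b * rising_b (- (c0 + cinf)) (k - j) b"
      unfolding GT_def fb_neg[symmetric] by (simp add: algebra_simps)
  qed
  also have "\<dots> = rising_b 0 k b" using rb_vandermonde[of "c0 + cinf" "- (c0 + cinf)" k b] by simp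
  finally show ?case by (simp add: rb_zero UU_0)
next
  case (Suc n k)
  define x where "x = b * of_nat n + c0 + cinf"
  define d where "d = (\<lambda>j::nat. b * of_nat j + c0 - a * of_nat n)"
  define Fr where "Fr = (\<lambda>j::nat. rising_b (c0 + cinf) j b * falling_b (b * of_nat j + c0) n a)"
  have xS: "b * of_nat (Suc n) + c0 + cinf = x + b" by (simp add: x_def algebra_simps)
  have fS: "\<And>j. falling_b (b * of_nat j + c0) (Suc n) a = falling_b (b * of_nat j + c0) n a * d j"
    by (simp add: fb_Suc2 d_def algebra_simps)
  have GTn: "\<And>k j. GT a b c0 cinf n k j = (-1) ^ (k - j) * of_nat (k choose j) * falling_b x (k - j) b * Fr j"
    by (simp add: GT_def x_def Fr_def mult_ac)
  have GTS: "\<And>k j. GT a b c0 cinf (Suc n) k j = (-1) ^ (k - j) * of_nat (k choose j) * falling_b (x + b) (k - j) b * Fr j * d j"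
    unfolding GT_def xS fS by (simp add: Fr_def mult_ac)
  show ?case
  proof (cases k)
    case 0
    then show ?thesis using Suc.IH[of 0] by (simp add: UU_Suc' GTn GTS d_def)
  next
    case (Suc k')
    define K where "K = Suc k'"
    define e where "e = (a + b) * of_nat n - b * of_nat k' + cinf"
    have kK: "k = K" by (simp add: K_def Suc)
    have "UU a b c0 cinf (Suc n) K = d K * (\<Sum>j\<le>K. GT a b c0 cinf n K j) + e * b * of_nat K * (\<Sum>j\<le>k'. GT a b c0 cinf n k' j)"
      by (simp add: UU_Suc' GG_def Suc.IH K_def d_def e_def del: of_nat_Suc)
    also have "\<dots> = d K * (\<Sum>j\<le>k'. GT a b c0 cinf n K j) + e * b * of_nat K * (\<Sum>j\<le>k'. GT a b c0 cinf n k' j)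
        + d K * GT a b c0 cinf n K K"
      by (simp add: K_def algebra_simps)
    also have "d K * (\<Sum>j\<le>k'. GT a b c0 cinf n K j) + e * b * of_nat K * (\<Sum>j\<le>k'. GT a b c0 cinf n k' j)
        = (\<Sum>j\<le>k'. GT a b c0 cinf (Suc n) K j)"
      unfolding sum_distrib_left sum.distrib[symmetric]
    proof (intro sum.cong refl)
      fix j assume "j \<in> {..k'}"
      then have jk: "j \<le> k'" by simp
      define p where "p = k' - j"
      have Kj: "K - j = Suc p" using jk by (simp add: K_def p_def)
      have kj: "k' - j = p" by (simp add: p_def)
      have dK: "d K = d j + b * of_nat (Suc p)" using jk by (simp add: d_def K_def p_def of_nat_diff algebra_simps)
      have ee: "e = x - d j - b * of_nat p" using jk by (simp add: e_def x_def d_def p_def of_nat_diff algebra_simps)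
      have h1: "falling_b (x + b) (Suc p) b * d j = d K * falling_b x (Suc p) b - e * b * of_nat (Suc p) * falling_b x p b"
        unfolding dK ee by (rule key2)
      have A: "(K - j) * (K choose j) = K * ((K - 1) choose j)" by (rule binomial_absorb_comp)
      have K1: "K - 1 = k'" by (simp add: K_def)
      have "K * (k' choose j) = (K choose j) * Suc p"
        using A unfolding Kj K1 by (simp only: mult.commute)
      then have h2: "of_nat K * of_nat (k' choose j) = of_nat (K choose j) * (of_nat (Suc p) :: complex)"
        by (metis of_nat_mult)
      show "d K * GT a b c0 cinf n K j + e * b * of_nat K * GT a b c0 cinf n k' j = GT a b c0 cinf (Suc n) K j"
        unfolding GTn GTS Kj kj using alg[OF h1 h2, of p "Fr j"] by simp
    qed
    also have "d K * GT a b c0 cinf n K K = GT a b c0 cinf (Suc n) K K"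
      by (simp add: GTn GTS)
    also have "(\<Sum>j\<le>k'. GT a b c0 cinf (Suc n) K j) + GT a b c0 cinf (Suc n) K K = (\<Sum>j\<le>K. GT a b c0 cinf (Suc n) K j)"
      by (simp add: K_def)
    finally show ?thesis unfolding kK .
  qed
qed


theorem mainTheorem11:
  fixes a b c0 cinf :: complex and n k :: nat
  assumes "k \<le> n"
  shows "(b ^ k * of_nat (fact k) * genEuler a b c0 cinf n k =
           (\<Sum>j\<le>k. (-1) ^ (k - j) * of_nat (k choose j)
              * falling_b (b * of_nat n + c0 + cinf) (k - j) b
              * rising_b (c0 + cinf) j b
              * falling_b (b * of_nat j + c0) n a)) \<and>
         (rising_b (c0 + cinf) k b * falling_b (b * of_nat k + c0) n a =
           (\<Sum>j\<le>k. of_nat (k choose j)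
              * rising_b (b * of_nat n + c0 + cinf) (k - j) b
              * b ^ j * of_nat (fact j) * genEuler a b c0 cinf n j))"
proof
  show "b ^ k * of_nat (fact k) * genEuler a b c0 cinf n k =
           (\<Sum>j\<le>k. (-1) ^ (k - j) * of_nat (k choose j)
              * falling_b (b * of_nat n + c0 + cinf) (k - j) b
              * rising_b (c0 + cinf) j b
              * falling_b (b * of_nat j + c0) n a)"
    using ident1[of a b c0 cinf n k] unfolding UU_def GT_def .
  show "rising_b (c0 + cinf) k b * falling_b (b * of_nat k + c0) n a =
           (\<Sum>j\<le>k. of_nat (k choose j)
              * rising_b (b * of_nat n + c0 + cinf) (k - j) b
              * b ^ j * of_nat (fact j) * genEuler a b c0 cinf n j)"
    unfolding ident2[of c0 cinf k b n a] UU_def by (simp add: mult_ac)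
qed

end
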